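(* Let $n$ be a natural number and $s$ a negative integer with $n+s>0$, and put $m=\frac{(-s)(n-1)}{n+s}$. Suppose there exists a divisible design graph $\Delta$ with parameters $(V,K,\lambda_1,\lambda_2;m,n)$, where $V=\frac{n(-s)(n-1)}{n+s}$, $K=(-s)(n-1)$, $\lambda_1=(-s)(n+s-1)$, $\lambda_2=\frac{(-s)(n-1)(n+s)}{n}$, with canonical classes $P_1,\dots,P_m$. Let $\mathcal{D}=(\mathcal{P},\mathcal{B})$ be a symmetric $2$-design with parameters $(m,-s,\frac{(-s)(n+s)}{n})$, with $\mathcal{P}$ disjoint from the vertex set of $\Delta$, and let $\phi$ be any bijection from $\{P_1,\dots,P_m\}$ to $\mathcal{B}$. Define the graph $\Gamma$ with vertex set $V(\Delta)\cup\mathcal{P}$ in which: two vertices of $\Delta$ are adjacent iff they are adjacent in $\Delta$; no two points of $\mathcal{P}$ are adjacent; a vertex $x\in P_i$ is adjacent to $y\in\mathcal{P}$ iff $y\in\phi(P_i)$. Then $\Gamma$ is a strongly regular graph with parameters $v=m(n+1)$, $k=(-s)n$, $\lambda=\mu=(-s)(n+s)$.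
   Context: A $K$-regular graph on $V$ vertices, neither complete nor edgeless, is a divisible design graph with parameters $(V,K,\lambda_1,\lambda_2;m,n)$ if its vertex set can be partitioned into $m$ classes (canonical classes) of size $n$ such that any two distinct vertices in the same class have exactly $\lambda_1$ common neighbours and any two vertices in different classes have exactly $\lambda_2$ common neighbours. A symmetric $2$-design with parameters $(m,\kappa,\ell)$ is a pair $(\mathcal{P},\mathcal{B})$ where $\mathcal{P}$ is a set of $m$ points and $\mathcal{B}$ a set of $m$ subsets (blocks) of $\mathcal{P}$, each of size $\kappa$, such that every two distinct points lie in exactly $\ell$ common blocks (equivalently, any two distinct blocks meet in exactly $\ell$ points). A strongly regular graph with parameters $(v,k,\lambda,\mu)$ is a $k$-regular graph on $v$ vertices in which adjacent vertices have $\lambda$ and distinct non-adjacent vertices have $\mu$ common neighbours. *)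

theory Defs
  imports Main
begin

definition simple_graph :: "'a set \<Rightarrow> ('a \<Rightarrow> 'a \<Rightarrow> bool) \<Rightarrow> bool" where
  "simple_graph V E \<longleftrightarrow> finite V \<and> (\<forall>x y. E x y \<longrightarrow> x \<in> V \<and> y \<in> V)
     \<and> (\<forall>x y. E x y \<longrightarrow> E y x) \<and> (\<forall>x. \<not> E x x)"

definition common_nbrs :: "'a set \<Rightarrow> ('a \<Rightarrow> 'a \<Rightarrow> bool) \<Rightarrow> 'a \<Rightarrow> 'a \<Rightarrow> nat" where
  "common_nbrs V E x y = card {z \<in> V. E x z \<and> E y z}"

definition regular_graph :: "'a set \<Rightarrow> ('a \<Rightarrow> 'a \<Rightarrow> bool) \<Rightarrow> nat \<Rightarrow> bool" where
  "regular_graph V E k \<longleftrightarrow> simple_graph V E \<and> (\<forall>x\<in>V. card {y \<in> V. E x y} = k)"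

definition complete_graph :: "'a set \<Rightarrow> ('a \<Rightarrow> 'a \<Rightarrow> bool) \<Rightarrow> bool" where
  "complete_graph V E \<longleftrightarrow> (\<forall>x\<in>V. \<forall>y\<in>V. x \<noteq> y \<longrightarrow> E x y)"

definition edgeless_graph :: "'a set \<Rightarrow> ('a \<Rightarrow> 'a \<Rightarrow> bool) \<Rightarrow> bool" where
  "edgeless_graph V E \<longleftrightarrow> (\<forall>x\<in>V. \<forall>y\<in>V. \<not> E x y)"

definition dd_graph ::
  "'a set \<Rightarrow> ('a \<Rightarrow> 'a \<Rightarrow> bool) \<Rightarrow> nat \<Rightarrow> nat \<Rightarrow> nat \<Rightarrow> nat \<Rightarrow> nat \<Rightarrow> nat \<Rightarrow> 'a set set \<Rightarrow> bool" where
  "dd_graph V E v k l1 l2 m n classes \<longleftrightarrow>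
     regular_graph V E k \<and> card V = v \<and>
     \<not> complete_graph V E \<and> \<not> edgeless_graph V E \<and>
     (\<Union>classes = V) \<and> (\<forall>C\<in>classes. \<forall>D\<in>classes. C \<noteq> D \<longrightarrow> C \<inter> D = {}) \<and>
     card classes = m \<and> (\<forall>C\<in>classes. card C = n) \<and>
     (\<forall>C\<in>classes. \<forall>x\<in>C. \<forall>y\<in>C. x \<noteq> y \<longrightarrow> common_nbrs V E x y = l1) \<and>
     (\<forall>C\<in>classes. \<forall>D\<in>classes. C \<noteq> D \<longrightarrow> (\<forall>x\<in>C. \<forall>y\<in>D. common_nbrs V E x y = l2))"

definition symmetric_design :: "'a set \<Rightarrow> 'a set set \<Rightarrow> nat \<Rightarrow> nat \<Rightarrow> nat \<Rightarrow> bool" where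
  "symmetric_design P B m \<kappa> l \<longleftrightarrow>
     finite P \<and> card P = m \<and> card B = m \<and>
     (\<forall>b\<in>B. b \<subseteq> P \<and> card b = \<kappa>) \<and>
     (\<forall>x\<in>P. \<forall>y\<in>P. x \<noteq> y \<longrightarrow> card {b \<in> B. x \<in> b \<and> y \<in> b} = l)"

definition strongly_regular :: "'a set \<Rightarrow> ('a \<Rightarrow> 'a \<Rightarrow> bool) \<Rightarrow> nat \<Rightarrow> nat \<Rightarrow> nat \<Rightarrow> nat \<Rightarrow> bool" where
  "strongly_regular V E v k lam mu \<longleftrightarrow>
     regular_graph V E k \<and> card V = v \<and>
     (\<forall>x\<in>V. \<forall>y\<in>V. E x y \<longrightarrow> common_nbrs V E x y = lam) \<and>
     (\<forall>x\<in>V. \<forall>y\<in>V. x \<noteq> y \<and> \<not> E x y \<longrightarrow> common_nbrs V E x y = mu)"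

definition gamma_adj ::
  "'a set \<Rightarrow> ('a \<Rightarrow> 'a \<Rightarrow> bool) \<Rightarrow> 'a set set \<Rightarrow> 'a set \<Rightarrow> ('a set \<Rightarrow> 'a set) \<Rightarrow> 'a \<Rightarrow> 'a \<Rightarrow> bool" where
  "gamma_adj V E classes P \<phi> x y \<longleftrightarrow>
     (x \<in> V \<and> y \<in> V \<and> E x y) \<or>
     (\<exists>C\<in>classes. x \<in> C \<and> y \<in> P \<and> y \<in> \<phi> C) \<or>
     (\<exists>C\<in>classes. y \<in> C \<and> x \<in> P \<and> x \<in> \<phi> C)"

end

theory Submission
  imports Defs
begin

lemma dcount:
  assumes "finite A" "finite B"
  shows "(\<Sum>a\<in>A. card {b\<in>B. R a b}) = (\<Sum>b\<in>B. card {a\<in>A. R a b})"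
proof -
  have "(\<Sum>a\<in>A. card {b\<in>B. R a b}) = (\<Sum>a\<in>A. \<Sum>b\<in>B. (of_bool (R a b)::nat))"
    using assms by (simp add: Int_def conj_commute)
  also have "\<dots> = (\<Sum>b\<in>B. \<Sum>a\<in>A. (of_bool (R a b)::nat))" by (rule sum.swap)
  also have "\<dots> = (\<Sum>b\<in>B. card {a\<in>A. R a b})"
    using assms by (simp add: Int_def conj_commute)
  finally show ?thesis .
qed

lemma sq_zero:
  fixes f :: "'b \<Rightarrow> int"
  assumes "finite I" "(\<Sum>i\<in>I. (f i - c)^2) = 0" "i \<in> I"
  shows "f i = c"
proof -
  have "\<forall>i\<in>I. (f i - c)^2 = 0"
    using sum_nonneg_eq_0_iff[of I "\<lambda>i. (f i - c)^2"] assms by auto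
  then show ?thesis using assms(3) by auto
qed

lemma sq_expand:
  fixes f :: "'b \<Rightarrow> int"
  shows "(\<Sum>i\<in>I. (f i - c)^2) = (\<Sum>i\<in>I. (f i)^2) - 2*c*(\<Sum>i\<in>I. f i) + int (card I) * c^2"
proof -
  have "(\<Sum>i\<in>I. (f i - c)^2) = (\<Sum>i\<in>I. (f i)^2 - 2*c*f i + c^2)"
    by (rule sum.cong) (auto simp: power2_diff)
  also have "\<dots> = (\<Sum>i\<in>I. (f i)^2) - (\<Sum>i\<in>I. 2*c*f i) + (\<Sum>i\<in>I. c^2)"
    by (simp add: sum.distrib sum_subtractf)
  also have "\<dots> = (\<Sum>i\<in>I. (f i)^2) - 2*c*(\<Sum>i\<in>I. f i) + int (card I) * c^2"
    by (simp add: sum_distrib_left)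
  finally show ?thesis .
qed

lemma card_sq: "card S ^ 2 = card (S \<times> S)"
  by (simp add: card_cartesian_product power2_eq_square)

lemma design_rep:
  assumes des: "symmetric_design P B m k l" and fB: "finite B"
    and kk: "k \<ge> 2" and lm: "int l * (int m - 1) = int k * (int k - 1)"
    and p: "p \<in> P"
  shows "card {b\<in>B. p \<in> b} = k"
proof -
  from des have fP: "finite P" and cP: "card P = m" and bl: "\<forall>b\<in>B. b \<subseteq> P \<and> card b = k"
    and pr: "\<forall>x\<in>P. \<forall>y\<in>P. x \<noteq> y \<longrightarrow> card {b \<in> B. x \<in> b \<and> y \<in> b} = l"
    unfolding symmetric_design_def by auto
  have "(\<Sum>q\<in>P-{p}. card {b\<in>B. p \<in> b \<and> q \<in> b}) = (\<Sum>q\<in>P-{p}. l)"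
    by (rule sum.cong) (use pr p in auto)
  also have "\<dots> = (m - 1) * l" using cP p fP by simp
  finally have e1: "(\<Sum>q\<in>P-{p}. card {b\<in>B. p \<in> b \<and> q \<in> b}) = (m - 1) * l" .
  have "(\<Sum>q\<in>P-{p}. card {b\<in>B. p \<in> b \<and> q \<in> b}) = (\<Sum>b\<in>B. card {q\<in>P-{p}. p \<in> b \<and> q \<in> b})"
    by (rule dcount) (use fP fB in auto)
  also have "\<dots> = (\<Sum>b\<in>B. if p \<in> b then k - 1 else 0)"
  proof (rule sum.cong)
    fix b assume b: "b \<in> B"
    show "card {q\<in>P-{p}. p \<in> b \<and> q \<in> b} = (if p \<in> b then k - 1 else 0)"
    proof (cases "p \<in> b")
      case True
      have "{q\<in>P-{p}. p \<in> b \<and> q \<in> b} = b - {p}" using bl b True by auto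
      moreover have "finite b" using bl b fP finite_subset by blast
      ultimately show ?thesis using True bl b by simp
    qed simp
  qed simp
  also have "\<dots> = (\<Sum>b\<in>{b\<in>B. p \<in> b}. k - 1)" using sum.inter_filter[OF fB, of "\<lambda>b. k - 1" "\<lambda>b. p \<in> b"] by simp
  also have "\<dots> = card {b\<in>B. p \<in> b} * (k - 1)" by simp
  finally have e2: "card {b\<in>B. p \<in> b} * (k - 1) = (m - 1) * l" using e1 by simp
  have m1: "m \<ge> 1" using cP p fP by (metis One_nat_def card_gt_0_iff empty_iff less_eq_Suc_le)
  have "int (card {b\<in>B. p \<in> b}) * (int k - 1) = int k * (int k - 1)"
    using arg_cong[OF e2, of int] lm m1 kk by (simp add: of_nat_diff algebra_simps)
  then have "int (card {b\<in>B. p \<in> b}) = int k" using kk by simp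
  then show ?thesis by simp
qed

lemma design_blocks:
  assumes des: "symmetric_design P B m k l" and fB: "finite B"
    and rep: "\<forall>p\<in>P. card {b\<in>B. p \<in> b} = k"
    and lm: "int l * (int m - 1) = int k * (int k - 1)"
    and b: "b \<in> B" and c: "c \<in> B" and bc: "b \<noteq> c"
  shows "card (b \<inter> c) = l"
proof -
  from des have fP: "finite P" and cB: "card B = m" and bl: "\<forall>b\<in>B. b \<subseteq> P \<and> card b = k"
    and pr: "\<forall>x\<in>P. \<forall>y\<in>P. x \<noteq> y \<longrightarrow> card {b \<in> B. x \<in> b \<and> y \<in> b} = l"
    unfolding symmetric_design_def by auto
  define B' where "B' = B - {b}"
  have fB': "finite B'" using fB B'_def by simp
  have cB': "card B' = m - 1" using cB b fB B'_def by simp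
  have bP: "b \<subseteq> P" and cb: "card b = k" using bl b by auto
  have fb: "finite b" using bP fP finite_subset by blast
  define x where "x c = int (card (b \<inter> c))" for c
  have S1: "(\<Sum>c\<in>B'. x c) = int k * (int k - 1)"
  proof -
    have "(\<Sum>c\<in>B'. card (b \<inter> c)) = (\<Sum>c\<in>B'. card {p\<in>b. p \<in> c})"
      by (rule sum.cong) (auto intro: arg_cong[where f=card])
    also have "\<dots> = (\<Sum>p\<in>b. card {c\<in>B'. p \<in> c})" by (rule dcount[OF fB' fb])
    also have "\<dots> = (\<Sum>p\<in>b. k - 1)"
    proof (rule sum.cong)
      fix p assume p: "p \<in> b"
      have "{c\<in>B'. p \<in> c} = {c\<in>B. p \<in> c} - {b}" using B'_def by auto
      moreover have "card {c\<in>B. p \<in> c} = k" using rep p bP by blast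
      moreover have "b \<in> {c\<in>B. p \<in> c}" using b p by simp
      ultimately show "card {c\<in>B'. p \<in> c} = k - 1" using card_Diff_singleton fB by simp
    qed simp
    finally have "(\<Sum>c\<in>B'. card (b \<inter> c)) = k * (k - 1)" using cb by simp
    then have "int (\<Sum>c\<in>B'. card (b \<inter> c)) = int k * (int k - 1)"
      by (cases k) (auto simp: algebra_simps)
    then show ?thesis unfolding x_def by simp
  qed
  have S2: "(\<Sum>c\<in>B'. (x c)^2) = int k * (int k - 1) * int l"
  proof -
    have "(\<Sum>c\<in>B'. card (b \<inter> c) ^ 2) = (\<Sum>c\<in>B'. card {pq\<in>b\<times>b. fst pq \<in> c \<and> snd pq \<in> c})"
      by (rule sum.cong) (auto simp: card_sq intro!: arg_cong[where f=card])
    also have "\<dots> = (\<Sum>pq\<in>b\<times>b. card {c\<in>B'. fst pq \<in> c \<and> snd pq \<in> c})"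
      by (rule dcount[OF fB']) (use fb in simp)
    also have "\<dots> = (\<Sum>pq\<in>b\<times>b. (if fst pq = snd pq then k - 1 else l - 1))"
    proof (rule sum.cong)
      fix pq assume pq: "pq \<in> b \<times> b"
      have e: "{c\<in>B'. fst pq \<in> c \<and> snd pq \<in> c} = {c\<in>B. fst pq \<in> c \<and> snd pq \<in> c} - {b}"
        using B'_def by auto
      show "card {c\<in>B'. fst pq \<in> c \<and> snd pq \<in> c} = (if fst pq = snd pq then k - 1 else l - 1)"
      proof (cases "fst pq = snd pq")
        case True
        have "{c\<in>B. fst pq \<in> c \<and> snd pq \<in> c} = {c\<in>B. fst pq \<in> c}" using True by simp
        moreover have "card {c\<in>B. fst pq \<in> c} = k" using rep pq bP by auto
        moreover have "b \<in> {c\<in>B. fst pq \<in> c}" using b pq by auto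
        ultimately show ?thesis using e True card_Diff_singleton fB by simp
      next
        case False
        have "card {c\<in>B. fst pq \<in> c \<and> snd pq \<in> c} = l" using pr pq bP False by (auto simp: subset_iff)
        moreover have "b \<in> {c\<in>B. fst pq \<in> c \<and> snd pq \<in> c}" using b pq by auto
        ultimately show ?thesis using e False card_Diff_singleton fB by simp
      qed
    qed simp
    also have "\<dots> = (\<Sum>p\<in>b. \<Sum>q\<in>b. (if p = q then k - 1 else l - 1))"
      by (simp add: sum.cartesian_product case_prod_beta)
    also have "\<dots> = (\<Sum>p\<in>b. (k - 1) + (k - 1) * (l - 1))"
    proof (rule sum.cong)
      fix p assume p: "p \<in> b"
      have "(\<Sum>q\<in>b. (if p = q then k - 1 else l - 1)) =
            (if p = p then k - 1 else l - 1) + (\<Sum>q\<in>b-{p}. (if p = q then k - 1 else l - 1))"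
        by (rule sum.remove[OF fb p])
      also have "(\<Sum>q\<in>b-{p}. (if p = q then k - 1 else l - 1)) = (\<Sum>q\<in>b-{p}. l - 1)"
        by (rule sum.cong) auto
      finally show "(\<Sum>q\<in>b. (if p = q then k - 1 else l - 1)) = (k - 1) + (k - 1) * (l - 1)"
        using cb fb p by simp
    qed simp
    finally have e: "(\<Sum>c\<in>B'. card (b \<inter> c) ^ 2) = k * ((k - 1) + (k - 1) * (l - 1))"
      using cb by simp
    have "l \<ge> 1 \<or> k \<le> 1"
    proof (rule ccontr)
      assume "\<not> (l \<ge> 1 \<or> k \<le> 1)"
      then have "l = 0" "k \<ge> 2" by auto
      with lm show False by simp
    qed
    then have pv: "int (k * ((k - 1) + (k - 1) * (l - 1))) = int k * (int k - 1) * int l"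
    proof
      assume "l \<ge> 1"
      then show ?thesis by (cases k) (auto simp: of_nat_diff algebra_simps)
    next
      assume "k \<le> 1"
      then have "k = 0 \<or> k = 1" by auto
      then show ?thesis by auto
    qed
    have A: "(\<Sum>c\<in>B'. (int (card (b \<inter> c)))^2) = int (\<Sum>c\<in>B'. card (b \<inter> c)^2)" by simp
    show ?thesis unfolding x_def A e by (rule pv)
  qed
  have "(\<Sum>c\<in>B'. (x c - int l)^2) = 0"
    unfolding sq_expand S1 S2 cB'
  proof -
    have m1: "m \<ge> 1" using cB b fB by (metis card_0_eq empty_iff less_one not_le)
    show "int k * (int k - 1) * int l - 2 * int l * (int k * (int k - 1)) + int (m - 1) * (int l)\<^sup>2 = 0"
      using arg_cong[OF lm, of "\<lambda>z. int l * z"] m1 by (simp add: of_nat_diff power2_eq_square algebra_simps)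
  qed
  moreover have "c \<in> B'" using c bc B'_def by auto
  ultimately have "x c = int l" using sq_zero[OF fB'] by blast
  then show ?thesis unfolding x_def by simp
qed

lemma ddg_uniform:
  assumes ddg: "dd_graph V E v K l1 l2 m n classes" and fC: "finite classes"
    and cV: "card V = m * n"
    and eq: "int K + (int n - 1) * int l1 - 2 * c * int K + int m * c^2 = 0"
    and x: "x \<in> V" and D: "D \<in> classes"
  shows "int (card {z\<in>D. E x z}) = c"
proof -
  from ddg have reg: "regular_graph V E K" and U: "\<Union>classes = V"
    and dj: "\<forall>C\<in>classes. \<forall>D\<in>classes. C \<noteq> D \<longrightarrow> C \<inter> D = {}"
    and cC: "card classes = m" and cn: "\<forall>C\<in>classes. card C = n"
    and L1: "\<forall>C\<in>classes. \<forall>x\<in>C. \<forall>y\<in>C. x \<noteq> y \<longrightarrow> common_nbrs V E x y = l1"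
    unfolding dd_graph_def by auto
  from reg have fV: "finite V" and Ein: "\<forall>x y. E x y \<longrightarrow> x \<in> V \<and> y \<in> V"
    and Es: "\<forall>x y. E x y \<longrightarrow> E y x" and deg: "\<forall>x\<in>V. card {y \<in> V. E x y} = K"
    unfolding regular_graph_def simple_graph_def by auto
  have CV: "C \<subseteq> V" if "C \<in> classes" for C using U that by blast
  have Esym: "E a b = E b a" for a b using Es by blast
  have fCl: "finite C" if "C \<in> classes" for C using CV[OF that] fV finite_subset by blast
  define f where "f y C = int (card {z\<in>C. E y z})" for y C
  have Sf: "(\<Sum>C\<in>classes. f y C) = int K" if y: "y \<in> V" for y
  proof -
    have "{z\<in>V. E y z} = (\<Union>C\<in>classes. {z\<in>C. E y z})" using U by auto
    then have "card {z\<in>V. E y z} = (\<Sum>C\<in>classes. card {z\<in>C. E y z})"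
    proof -
      have d2: "\<forall>i\<in>classes. \<forall>j\<in>classes. i \<noteq> j \<longrightarrow> {z\<in>i. E y z} \<inter> {z\<in>j. E y z} = {}"
        using dj by blast
      have f2: "\<forall>i\<in>classes. finite {z\<in>i. E y z}" using fCl by simp
      show ?thesis using card_UN_disjoint[OF fC f2 d2] \<open>{z\<in>V. E y z} = _\<close> by simp
    qed
    then show ?thesis using deg y unfolding f_def by simp
  qed
  have Sf2: "(\<Sum>y\<in>V. (f y C)^2) = int n * (int K + (int n - 1) * int l1)" if C: "C \<in> classes" for C
  proof -
    have "(\<Sum>y\<in>V. card {z\<in>C. E y z}^2) = (\<Sum>y\<in>V. card {pq\<in>C\<times>C. E y (fst pq) \<and> E y (snd pq)})"
      by (rule sum.cong) (auto simp: card_sq intro!: arg_cong[where f=card])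
    also have "\<dots> = (\<Sum>pq\<in>C\<times>C. card {y\<in>V. E y (fst pq) \<and> E y (snd pq)})"
      by (rule dcount[OF fV]) (use fCl[OF C] in simp)
    also have "\<dots> = (\<Sum>pq\<in>C\<times>C. if fst pq = snd pq then K else l1)"
    proof (rule sum.cong)
      fix pq assume pq: "pq \<in> C \<times> C"
      then have "fst pq \<in> V" "snd pq \<in> V" using CV[OF C] by auto
      show "card {y\<in>V. E y (fst pq) \<and> E y (snd pq)} = (if fst pq = snd pq then K else l1)"
      proof (cases "fst pq = snd pq")
        case True
        have "{y\<in>V. E y (fst pq) \<and> E y (snd pq)} = {y\<in>V. E (fst pq) y}"
          by (rule Collect_cong) (simp add: True Esym[of _ "snd pq"])
        then show ?thesis using True deg \<open>fst pq \<in> V\<close> by simp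
      next
        case False
        have "{y\<in>V. E y (fst pq) \<and> E y (snd pq)} = {y\<in>V. E (fst pq) y \<and> E (snd pq) y}"
          by (rule Collect_cong) (simp add: Esym[of _ "snd pq"] Esym[of _ "fst pq"])
        moreover have "common_nbrs V E (fst pq) (snd pq) = l1" using L1 C pq False by auto
        ultimately show ?thesis using False unfolding common_nbrs_def by simp
      qed
    qed simp
    also have "\<dots> = (\<Sum>p\<in>C. \<Sum>q\<in>C. if p = q then K else l1)"
      by (simp add: sum.cartesian_product case_prod_beta)
    also have "\<dots> = (\<Sum>p\<in>C. K + (n - 1) * l1)"
    proof (rule sum.cong)
      fix p assume p: "p \<in> C"
      have "(\<Sum>q\<in>C. if p = q then K else l1) = (if p = p then K else l1) + (\<Sum>q\<in>C-{p}. if p = q then K else l1)"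
        by (rule sum.remove[OF fCl[OF C] p])
      also have "(\<Sum>q\<in>C-{p}. if p = q then K else l1) = (\<Sum>q\<in>C-{p}. l1)"
        by (rule sum.cong) auto
      finally show "(\<Sum>q\<in>C. if p = q then K else l1) = K + (n - 1) * l1"
        using cn C fCl[OF C] p by simp
    qed simp
    finally have e: "(\<Sum>y\<in>V. card {z\<in>C. E y z}^2) = n * (K + (n - 1) * l1)" using cn C by simp
    have A: "(\<Sum>y\<in>V. (f y C)^2) = int (\<Sum>y\<in>V. card {z\<in>C. E y z}^2)" unfolding f_def by simp
    have pv: "int (n * (K + (n - 1) * l1)) = int n * (int K + (int n - 1) * int l1)"
      by (cases n) (auto simp: algebra_simps)
    show ?thesis unfolding A e by (rule pv)
  qed
  have tot: "(\<Sum>y\<in>V. \<Sum>C\<in>classes. (f y C - c)^2) = 0"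
  proof -
    have "(\<Sum>y\<in>V. \<Sum>C\<in>classes. (f y C - c)^2) = (\<Sum>C\<in>classes. \<Sum>y\<in>V. (f y C - c)^2)"
      by (rule sum.swap)
    also have "\<dots> = (\<Sum>C\<in>classes. (\<Sum>y\<in>V. (f y C)^2) - 2*c*(\<Sum>y\<in>V. f y C) + int (card V) * c^2)"
      by (simp add: sq_expand)
    also have "\<dots> = (\<Sum>C\<in>classes. (\<Sum>y\<in>V. (f y C)^2)) - 2*c*(\<Sum>y\<in>V. \<Sum>C\<in>classes. f y C) + int m * int (card V) * c^2"
      using cC by (simp add: sum_subtractf sum.distrib sum_distrib_left sum.swap[of _ V classes])
    also have "\<dots> = (\<Sum>C\<in>classes. int n * (int K + (int n - 1) * int l1)) - 2*c*(\<Sum>y\<in>V. int K) + int m * int (card V) * c^2"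
      using Sf Sf2 by simp
    also have "\<dots> = int m * int n * (int K + (int n - 1) * int l1 - 2 * c * int K + int m * c^2)"
      using cC cV by (simp add: algebra_simps)
    also have "\<dots> = 0" using eq by simp
    finally show ?thesis .
  qed
  have "\<forall>y\<in>V. (\<Sum>C\<in>classes. (f y C - c)^2) = 0"
    using sum_nonneg_eq_0_iff[of V "\<lambda>y. \<Sum>C\<in>classes. (f y C - c)^2"] tot fV
    by (simp add: sum_nonneg)
  then have "(\<Sum>C\<in>classes. (f x C - c)^2) = 0" using x by blast
  then have "f x D = c" using sq_zero[OF fC] D by blast
  then show ?thesis unfolding f_def .
qed

theorem theorem4p3:
  fixes n :: nat and s :: int and m v K l1 l2 l :: nat
    and V P :: "'a set" and E :: "'a \<Rightarrow> 'a \<Rightarrow> bool"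
    and classes B :: "'a set set" and \<phi> :: "'a set \<Rightarrow> 'a set"
  assumes s_neg: "s < 0" and ns_pos: "int n + s > 0"
    and m_def: "int m * (int n + s) = (- s) * (int n - 1)"
    and v_def: "int v * (int n + s) = int n * (- s) * (int n - 1)"
    and K_def: "int K = (- s) * (int n - 1)"
    and l1_def: "int l1 = (- s) * (int n + s - 1)"
    and l2_def: "int l2 * int n = (- s) * (int n - 1) * (int n + s)"
    and l_def: "int l * int n = (- s) * (int n + s)"
    and ddg: "dd_graph V E v K l1 l2 m n classes"
    and des: "symmetric_design P B m (nat (- s)) l"
    and disj: "P \<inter> V = {}"
    and phi: "bij_betw \<phi> classes B"
  shows "strongly_regular (V \<union> P) (gamma_adj V E classes P \<phi>)
           (m * (n + 1)) (nat ((- s) * int n)) (nat ((- s) * (int n + s))) (nat ((- s) * (int n + s)))"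
proof -
  define t where "t = nat (- s)"
  have sD: "s = - int t" using s_neg by (simp add: t_def)
  have t1: "t \<ge> 1" using s_neg sD by simp
  have nt: "t < n" using ns_pos sD by simp
  have mD: "int m * (int n - int t) = int t * (int n - 1)" using m_def sD by (simp add: algebra_simps)
  have vD: "int v * (int n - int t) = int n * int t * (int n - 1)" using v_def sD by (simp add: algebra_simps)
  have KD: "int K = int t * (int n - 1)" using K_def sD by (simp add: algebra_simps)
  have l1D: "int l1 = int t * (int n - int t - 1)" using l1_def sD by (simp add: algebra_simps)
  have l2D: "int l2 * int n = int t * (int n - 1) * (int n - int t)" using l2_def sD by (simp add: algebra_simps)
  have lD: "int l * int n = int t * (int n - int t)" using l_def sD by (simp add: algebra_simps)
  have nmt: "int (n - t) = int n - int t" using nt by simp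
  have n2: "n \<ge> 2" using nt t1 by simp
  have mpos: "m \<ge> 1"
  proof (rule ccontr)
    assume "\<not> m \<ge> 1" then have "m = 0" by simp
    then have "int t * (int n - 1) = 0" using mD by simp
    then show False using t1 n2 by simp
  qed
  have t2: "t \<ge> 2"
  proof (rule ccontr)
    assume "\<not> t \<ge> 2" then have "t = 1" using t1 by simp
    then have "int l * int n = int n - 1" using lD by simp
    moreover have "l = 0 \<or> l \<ge> 1" by auto
    ultimately show False using n2
    proof -
      assume a: "int l * int n = int n - 1" and b: "l = 0 \<or> l \<ge> 1"
      show False using b
      proof
        assume "l = 0" then show False using a n2 by simp
      next
        assume "l \<ge> 1"
        then have "int l * int n \<ge> 1 * int n" by (intro mult_right_mono) auto
        then show False using a by simp
      qed
    qed
  qed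
  have lm: "int l * (int m - 1) = int t * (int t - 1)"
  proof -
    have "int n * (int n - int t) * (int l * (int m - 1))
        = (int l * int n) * (int m * (int n - int t)) - (int l * int n) * (int n - int t)"
      by (simp add: algebra_simps)
    also have "\<dots> = int n * (int n - int t) * (int t * (int t - 1))"
      unfolding lD mD by (simp add: algebra_simps)
    finally have "int n * (int n - int t) * (int l * (int m - 1)) = int n * (int n - int t) * (int t * (int t - 1))" .
    moreover have "int n * (int n - int t) \<noteq> 0" using nt by simp
    ultimately show ?thesis by simp
  qed
  have vmn: "v = m * n"
  proof -
    have "int (m * n) * (int n - int t) = int n * (int m * (int n - int t))" by (simp add: algebra_simps)
    also have "\<dots> = int v * (int n - int t)" unfolding mD vD by (simp add: algebra_simps)
    finally have e: "int (m * n) * (int n - int t) = int v * (int n - int t)" .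
    have "int n - int t \<noteq> 0" using nt by simp
    then have "int (m * n) = int v" using e by simp
    then show ?thesis by (metis of_nat_eq_iff of_nat_mult)
  qed
  from ddg have reg: "regular_graph V E K" and cardV: "card V = v" and U: "\<Union>classes = V"
    and dj: "\<forall>C\<in>classes. \<forall>D\<in>classes. C \<noteq> D \<longrightarrow> C \<inter> D = {}"
    and cC: "card classes = m" and cn: "\<forall>C\<in>classes. card C = n"
    and L1: "\<forall>C\<in>classes. \<forall>x\<in>C. \<forall>y\<in>C. x \<noteq> y \<longrightarrow> common_nbrs V E x y = l1"
    and L2: "\<forall>C\<in>classes. \<forall>D\<in>classes. C \<noteq> D \<longrightarrow> (\<forall>x\<in>C. \<forall>y\<in>D. common_nbrs V E x y = l2)"
    unfolding dd_graph_def by auto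
  from reg have fV: "finite V" and Ein: "\<forall>x y. E x y \<longrightarrow> x \<in> V \<and> y \<in> V"
    and Es: "\<forall>x y. E x y \<longrightarrow> E y x" and Eirr: "\<forall>x. \<not> E x x"
    and deg: "\<forall>x\<in>V. card {y \<in> V. E x y} = K"
    unfolding regular_graph_def simple_graph_def by auto
  from des have fP: "finite P" and cP: "card P = m" and cB: "card B = m"
    and bl: "\<forall>b\<in>B. b \<subseteq> P \<and> card b = t"
    and pr: "\<forall>x\<in>P. \<forall>y\<in>P. x \<noteq> y \<longrightarrow> card {b \<in> B. x \<in> b \<and> y \<in> b} = l"
    unfolding symmetric_design_def t_def by auto
  have des': "symmetric_design P B m t l" using des unfolding t_def .
  have fC: "finite classes" using cC mpos by (intro card_ge_0_finite) simp
  have fB: "finite B" using cB mpos by (intro card_ge_0_finite) simp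
  have cV: "card V = m * n" using cardV vmn by simp
  have rep: "\<forall>p\<in>P. card {b\<in>B. p \<in> b} = t"
    using design_rep[OF des' fB t2 lm] by blast
  have blk: "\<And>b c. b \<in> B \<Longrightarrow> c \<in> B \<Longrightarrow> b \<noteq> c \<Longrightarrow> card (b \<inter> c) = l"
    using design_blocks[OF des' fB rep lm] by blast
  have eqc: "int K + (int n - 1) * int l1 - 2 * (int n - int t) * int K + int m * (int n - int t)^2 = 0"
  proof -
    have "int m * (int n - int t)^2 = (int m * (int n - int t)) * (int n - int t)"
      by (simp add: power2_eq_square)
    also have "\<dots> = int t * (int n - 1) * (int n - int t)" unfolding mD ..
    finally have "int m * (int n - int t)^2 = int t * (int n - 1) * (int n - int t)" .
    then show ?thesis unfolding KD l1D by (simp add: algebra_simps)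
  qed
  have unif: "\<And>x D. x \<in> V \<Longrightarrow> D \<in> classes \<Longrightarrow> card {z\<in>D. E x z} = n - t"
  proof -
    fix x D assume "x \<in> V" "D \<in> classes"
    then have "int (card {z\<in>D. E x z}) = int n - int t"
      using ddg_uniform[OF ddg fC cV eqc] by blast
    then show "card {z\<in>D. E x z} = n - t" using nt by simp
  qed

  define cl where "cl x = (THE C. C \<in> classes \<and> x \<in> C)" for x
  have clu: "cl x = C" if "C \<in> classes" "x \<in> C" for x C
  proof -
    have "\<exists>!C. C \<in> classes \<and> x \<in> C" using that dj by blast
    then show ?thesis unfolding cl_def using that by (metis (mono_tags, lifting) the_equality)
  qed
  have clp: "cl x \<in> classes \<and> x \<in> cl x" if xV: "x \<in> V" for x
  proof -
    obtain C where "C \<in> classes" "x \<in> C" using U xV by blast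
    then show ?thesis using clu by simp
  qed
  have CV: "C \<subseteq> V" if "C \<in> classes" for C using U that by blast
  have fCl: "finite C" if "C \<in> classes" for C using CV[OF that] fV finite_subset by blast
  have phB: "\<phi> C \<in> B" if "C \<in> classes" for C using bij_betw_apply[OF phi that] .
  have phP: "\<phi> C \<subseteq> P" if "C \<in> classes" for C using bl phB[OF that] by simp
  have phc: "card (\<phi> C) = t" if "C \<in> classes" for C using bl phB[OF that] by simp
  have phinj: "inj_on \<phi> classes" using bij_betw_imp_inj_on[OF phi] .
  have phim: "\<phi> ` classes = B" using bij_betw_imp_surj_on[OF phi] .
  have Esym: "E a b = E b a" for a b using Es by blast
  let ?A = "gamma_adj V E classes P \<phi>"
  have a1: "?A x z \<longleftrightarrow> E x z" if "x \<in> V" "z \<in> V" for x z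
    using that disj CV unfolding gamma_adj_def by blast
  have a2: "?A x z \<longleftrightarrow> z \<in> \<phi> (cl x)" if "x \<in> V" "z \<in> P" for x z
  proof -
    have "z \<notin> V" "x \<notin> P" using that disj by auto
    then have "?A x z \<longleftrightarrow> (\<exists>C\<in>classes. x \<in> C \<and> z \<in> \<phi> C)"
      using that unfolding gamma_adj_def by blast
    also have "\<dots> \<longleftrightarrow> z \<in> \<phi> (cl x)" using clp[OF that(1)] clu by metis
    finally show ?thesis .
  qed
  have a3: "?A x z \<longleftrightarrow> x \<in> \<phi> (cl z)" if "x \<in> P" "z \<in> V" for x z
  proof -
    have "z \<notin> P" "x \<notin> V" using that disj by auto
    then have "?A x z \<longleftrightarrow> (\<exists>C\<in>classes. z \<in> C \<and> x \<in> \<phi> C)"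
      using that CV unfolding gamma_adj_def by blast
    also have "\<dots> \<longleftrightarrow> x \<in> \<phi> (cl z)" using clp[OF that(2)] clu by metis
    finally show ?thesis .
  qed
  have a4: "\<not> ?A x z" if "x \<in> P" "z \<in> P" for x z
    using that disj CV unfolding gamma_adj_def by blast
  have ain: "x \<in> V \<union> P \<and> z \<in> V \<union> P" if "?A x z" for x z
    using that Ein CV phP unfolding gamma_adj_def by blast
  have asym: "?A z x" if "?A x z" for x z
    using that Es unfolding gamma_adj_def by blast
  have airr: "\<not> ?A x x" for x
    using Eirr disj CV phP unfolding gamma_adj_def by blast
  have cUn: "card (\<Union>S) = n * card S" if "S \<subseteq> classes" for S
  proof -
    have "pairwise disjnt S" using that dj unfolding pairwise_def disjnt_def by blast
    then have "card (\<Union>S) = sum card S" using card_Union_disjoint fCl that by blast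
    also have "\<dots> = sum (\<lambda>_. n) S" using cn that by (intro sum.cong) auto
    finally show ?thesis by simp
  qed
  have phcount: "card {C\<in>classes. Q (\<phi> C)} = card {b\<in>B. Q b}" for Q
  proof -
    have "\<phi> ` {C\<in>classes. Q (\<phi> C)} = {b\<in>\<phi> ` classes. Q b}" by auto
    then have i: "\<phi> ` {C\<in>classes. Q (\<phi> C)} = {b\<in>B. Q b}" unfolding phim .
    have "inj_on \<phi> {C\<in>classes. Q (\<phi> C)}" by (rule inj_on_subset[OF phinj]) auto
    from card_image[OF this] show ?thesis unfolding i by simp
  qed
  have degV: "card {z\<in>V \<union> P. ?A x z} = t * n" if x: "x \<in> V" for x
  proof -
    have "{z\<in>V \<union> P. ?A x z} = {z\<in>V. E x z} \<union> \<phi> (cl x)"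
      using a1[OF x] a2[OF x] phP clp[OF x] by blast
    moreover have "{z\<in>V. E x z} \<inter> \<phi> (cl x) = {}" using phP clp[OF x] disj by blast
    ultimately have "card {z\<in>V \<union> P. ?A x z} = K + t"
      using card_Un_disjoint fV fCl phc clp[OF x] deg x fP phP
      by (metis (no_types, lifting) finite_subset mem_Collect_eq subsetI)
    moreover have "K + t = t * n"
    proof -
      have "int (K + t) = int (t * n)" using KD by (simp add: algebra_simps)
      then show ?thesis by (simp only: of_nat_eq_iff)
    qed
    ultimately show ?thesis by simp
  qed
  have degP: "card {z\<in>V \<union> P. ?A y z} = t * n" if y: "y \<in> P" for y
  proof -
    have "{z\<in>V \<union> P. ?A y z} = \<Union>{C\<in>classes. y \<in> \<phi> C}"
    proof (intro equalityI subsetI)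
      fix z assume "z \<in> {z\<in>V \<union> P. ?A y z}"
      then have "z \<in> V" "y \<in> \<phi> (cl z)" using a3[OF y] a4[OF y] by auto
      then show "z \<in> \<Union>{C\<in>classes. y \<in> \<phi> C}" using clp by blast
    next
      fix z assume "z \<in> \<Union>{C\<in>classes. y \<in> \<phi> C}"
      then obtain C where C: "C \<in> classes" "z \<in> C" "y \<in> \<phi> C" by blast
      then have "z \<in> V" using CV by blast
      then show "z \<in> {z\<in>V \<union> P. ?A y z}" using a3[OF y] clu C by auto
    qed
    then have "card {z\<in>V \<union> P. ?A y z} = n * card {C\<in>classes. y \<in> \<phi> C}" using cUn by simp
    also have "\<dots> = n * card {b\<in>B. y \<in> b}" using phcount by simp
    also have "\<dots> = n * t" using rep y by simp
    finally show ?thesis by simp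
  qed
  have lam: "card {z\<in>V \<union> P. ?A x z \<and> ?A y z} = t * (n - t)"
    if x: "x \<in> V \<union> P" and y: "y \<in> V \<union> P" and xy: "x \<noteq> y" for x y
  proof -
    have VV: "card {z\<in>V \<union> P. ?A x z \<and> ?A y z} = t * (n - t)" if x: "x \<in> V" and y: "y \<in> V" and xy: "x \<noteq> y" for x y
    proof -
      have seq: "{z\<in>V \<union> P. ?A x z \<and> ?A y z} = {z\<in>V. E x z \<and> E y z} \<union> (\<phi> (cl x) \<inter> \<phi> (cl y))"
        using a1[OF x] a1[OF y] a2[OF x] a2[OF y] phP clp[OF x] by blast
      have dsj: "{z\<in>V. E x z \<and> E y z} \<inter> (\<phi> (cl x) \<inter> \<phi> (cl y)) = {}" using phP clp[OF x] disj by blast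
      have fin2: "finite (\<phi> (cl x) \<inter> \<phi> (cl y))" using phP clp[OF x] fP finite_subset by blast
      have fin1: "finite {z\<in>V. E x z \<and> E y z}" using fV by simp
      have e: "card {z\<in>V \<union> P. ?A x z \<and> ?A y z} = common_nbrs V E x y + card (\<phi> (cl x) \<inter> \<phi> (cl y))"
        unfolding seq common_nbrs_def by (rule card_Un_disjoint[OF fin1 fin2 dsj])
      show ?thesis
      proof (cases "cl x = cl y")
        case True
        have "common_nbrs V E x y = l1" using L1 clp[OF x] clp[OF y] True xy by metis
        moreover have "card (\<phi> (cl x) \<inter> \<phi> (cl y)) = t" using True phc clp[OF x] by simp
        moreover have "l1 + t = t * (n - t)"
        proof -
          have "int (l1 + t) = int (t * (n - t))" using l1D nmt by (simp add: algebra_simps)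
          then show ?thesis by (simp only: of_nat_eq_iff)
        qed
        ultimately show ?thesis using e by simp
      next
        case False
        have "common_nbrs V E x y = l2" using L2 clp[OF x] clp[OF y] False by metis
        moreover have "\<phi> (cl x) \<noteq> \<phi> (cl y)" using False phinj clp[OF x] clp[OF y] inj_on_def by metis
        then have "card (\<phi> (cl x) \<inter> \<phi> (cl y)) = l" using blk phB clp[OF x] clp[OF y] by blast
        moreover have "l2 + l = t * (n - t)"
        proof -
          have "int (l2 + l) * int n = int (t * (n - t)) * int n"
            using l2D lD nmt by (simp add: algebra_simps)
          then have "int (l2 + l) = int (t * (n - t))" using n2 by simp
          then show ?thesis by (simp only: of_nat_eq_iff)
        qed
        ultimately show ?thesis using e by simp
      qed
    qed
    have VP: "card {z\<in>V \<union> P. ?A x z \<and> ?A y z} = t * (n - t)" if x: "x \<in> V" and y: "y \<in> P" for x y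
    proof -
      let ?S = "{D\<in>classes. y \<in> \<phi> D}"
      have "{z\<in>V \<union> P. ?A x z \<and> ?A y z} = (\<Union>D\<in>?S. {z\<in>D. E x z})"
      proof (intro equalityI subsetI)
        fix z assume "z \<in> {z\<in>V \<union> P. ?A x z \<and> ?A y z}"
        then have "z \<in> V" "E x z" "y \<in> \<phi> (cl z)" using a1[OF x] a3[OF y] a4[OF y] by auto
        then show "z \<in> (\<Union>D\<in>?S. {z\<in>D. E x z})" using clp by blast
      next
        fix z assume "z \<in> (\<Union>D\<in>?S. {z\<in>D. E x z})"
        then obtain D where D: "D \<in> classes" "z \<in> D" "y \<in> \<phi> D" "E x z" by blast
        then have "z \<in> V" using CV by blast
        then show "z \<in> {z\<in>V \<union> P. ?A x z \<and> ?A y z}" using a1[OF x] a3[OF y] clu D by auto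
      qed
      moreover have "card (\<Union>D\<in>?S. {z\<in>D. E x z}) = (\<Sum>D\<in>?S. card {z\<in>D. E x z})"
      proof (rule card_UN_disjoint)
        show "finite ?S" using fC by simp
        show "\<forall>i\<in>?S. finite {z\<in>i. E x z}" using fCl by simp
        show "\<forall>i\<in>?S. \<forall>j\<in>?S. i \<noteq> j \<longrightarrow> {z\<in>i. E x z} \<inter> {z\<in>j. E x z} = {}" using dj by blast
      qed
      moreover have "(\<Sum>D\<in>?S. card {z\<in>D. E x z}) = (\<Sum>D\<in>?S. n - t)"
        using unif x by (intro sum.cong) auto
      moreover have "card ?S = t" using phcount rep y by simp
      ultimately show ?thesis by (simp add: mult.commute)
    qed
    have PP: "card {z\<in>V \<union> P. ?A x z \<and> ?A y z} = t * (n - t)" if x: "x \<in> P" and y: "y \<in> P" and xy: "x \<noteq> y" for x y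
    proof -
      have "{z\<in>V \<union> P. ?A x z \<and> ?A y z} = \<Union>{C\<in>classes. x \<in> \<phi> C \<and> y \<in> \<phi> C}"
      proof (intro equalityI subsetI)
        fix z assume "z \<in> {z\<in>V \<union> P. ?A x z \<and> ?A y z}"
        then have "z \<in> V" "x \<in> \<phi> (cl z)" "y \<in> \<phi> (cl z)" using a3[OF x] a3[OF y] a4[OF x] by auto
        then show "z \<in> \<Union>{C\<in>classes. x \<in> \<phi> C \<and> y \<in> \<phi> C}" using clp by blast
      next
        fix z assume "z \<in> \<Union>{C\<in>classes. x \<in> \<phi> C \<and> y \<in> \<phi> C}"
        then obtain C where C: "C \<in> classes" "z \<in> C" "x \<in> \<phi> C" "y \<in> \<phi> C" by blast
        then have "z \<in> V" using CV by blast
        then show "z \<in> {z\<in>V \<union> P. ?A x z \<and> ?A y z}" using a3[OF x] a3[OF y] clu C by auto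
      qed
      then have "card {z\<in>V \<union> P. ?A x z \<and> ?A y z} = n * card {C\<in>classes. x \<in> \<phi> C \<and> y \<in> \<phi> C}"
        using cUn by simp
      also have "\<dots> = n * card {b\<in>B. x \<in> b \<and> y \<in> b}" using phcount[of "\<lambda>b. x \<in> b \<and> y \<in> b"] by simp
      also have "\<dots> = n * l" using pr x y xy by simp
      finally have e: "card {z\<in>V \<union> P. ?A x z \<and> ?A y z} = n * l" .
      have "int (n * l) = int (t * (n - t))" using lD nmt by (simp add: algebra_simps)
      then have "n * l = t * (n - t)" by (simp only: of_nat_eq_iff)
      then show ?thesis using e by simp
    qed
    show ?thesis
    proof (cases "x \<in> V")
      case True
      show ?thesis
      proof (cases "y \<in> V")
        case True
        then show ?thesis using VV \<open>x \<in> V\<close> xy by blast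
      next
        case False
        then show ?thesis using VP \<open>x \<in> V\<close> y by blast
      qed
    next
      case False
      then have xP: "x \<in> P" using x by blast
      show ?thesis
      proof (cases "y \<in> V")
        case True
        have "{z\<in>V \<union> P. ?A x z \<and> ?A y z} = {z\<in>V \<union> P. ?A y z \<and> ?A x z}" by blast
        then show ?thesis using VP[OF True xP] by simp
      next
        case False
        then show ?thesis using PP xP y xy by blast
      qed
    qed
  qed
  have cVP: "card (V \<union> P) = m * (n + 1)" using card_Un_disjoint fV fP disj cV cP
    by (simp add: Int_commute card_Un_disjoint)
  have nat1: "nat ((- s) * int n) = t * n" using sD by (simp add: nat_mult_distrib)
  have nat2: "nat ((- s) * (int n + s)) = t * (n - t)"
  proof -
    have "(- s) * (int n + s) = int (t * (n - t))" using sD nmt by simp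
    then show ?thesis by (metis nat_int)
  qed
  show ?thesis
    unfolding strongly_regular_def regular_graph_def simple_graph_def common_nbrs_def nat1 nat2
  proof (intro conjI ballI allI impI)
    show "finite (V \<union> P)" using fV fP by simp
  next
    fix x y assume "?A x y" then show "x \<in> V \<union> P" using ain by blast
  next
    fix x y assume "?A x y" then show "y \<in> V \<union> P" using ain by blast
  next
    fix x y assume "?A x y" then show "?A y x" using asym by blast
  next
    fix x show "\<not> ?A x x" using airr by blast
  next
    fix x assume "x \<in> V \<union> P" then show "card {y \<in> V \<union> P. ?A x y} = t * n"
      using degV degP by (auto simp: mult.commute)
  next
    show "card (V \<union> P) = m * (n + 1)" by (rule cVP)
  next
    fix x y assume "x \<in> V \<union> P" "y \<in> V \<union> P" "?A x y"
    then show "card {z \<in> V \<union> P. ?A x z \<and> ?A y z} = t * (n - t)" using lam airr by metis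
  next
    fix x y assume "x \<in> V \<union> P" "y \<in> V \<union> P" "x \<noteq> y \<and> \<not> ?A x y"
    then show "card {z \<in> V \<union> P. ?A x z \<and> ?A y z} = t * (n - t)" using lam by blast
  qed
qed
end
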